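(* Let $n\geq 1$ and let $i,j\geq 0$ be integers. Let $F_{n,i,j}$ denote the set of functions $f\colon[n+1]\to[n]$ such that the orbit of $n+1$ under $f$ has exactly $i$ elements and $f$ has exactly $j$ periodic points. Then \[ |F_{n,i+1,j}|=\sum_{s=0}^{\min(i,j)-1}\frac{(i+j-s-1)\, n!}{(n-i-j+s+1)!}\,n^{\,n-i-j+s}, \] with the convention that $1/m!=0$ for negative integers $m$ (and an empty sum equals $0$).
   Context: $[m]=\{1,\dots,m\}$. For $f\colon[n+1]\to[n]$, the orbit of $x$ is the set $\{x,f(x),f^2(x),\dots\}$ (iterating $f$, which makes sense since $[n]\subseteq[n+1]$), and $x$ is a periodic point of $f$ if $f^k(x)=x$ for some $k\geq 1$. *)

theory Defs
  imports Complex_Main "HOL-Library.FuncSet"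
begin

definition orbit_of :: "(nat \<Rightarrow> nat) \<Rightarrow> nat \<Rightarrow> nat set" where
  "orbit_of f x = {(f ^^ k) x | k. True}"

definition periodic_pt :: "(nat \<Rightarrow> nat) \<Rightarrow> nat \<Rightarrow> bool" where
  "periodic_pt f x \<longleftrightarrow> (\<exists>k\<ge>1. (f ^^ k) x = x)"

definition Fset :: "nat \<Rightarrow> nat \<Rightarrow> nat \<Rightarrow> (nat \<Rightarrow> nat) set" where
  "Fset n i j = {f \<in> {1..n+1} \<rightarrow>\<^sub>E {1..n}.
      card (orbit_of f (n+1)) = i \<and> card {x \<in> {1..n+1}. periodic_pt f x} = j}"

definition inv_fact :: "int \<Rightarrow> real" where
  "inv_fact m = (if m < 0 then 0 else 1 / fact (nat m))"

end

theory Submission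
  imports Defs "HOL-Combinatorics.Permutations"
begin

lemma funpow_agree:
  assumes "\<And>m. m < k \<Longrightarrow> (g^^m) x \<in> S" "\<And>y. y \<in> S \<Longrightarrow> g y = h y"
  shows "(g^^k) x = (h^^k) x"
  using assms(1)
proof (induction k)
  case 0 then show ?case by simp
next
  case (Suc k)
  then have "(g^^k) x = (h^^k) x" by simp
  moreover have "(g^^k) x \<in> S" using Suc.prems by simp
  ultimately show ?case using assms(2) by simp
qed

lemma first_hit:
  assumes "\<And>y. y \<in> A \<Longrightarrow> g y \<in> A \<union> B" "x \<in> A" "(g^^k) x \<in> B" "A \<inter> B = {}"
  shows "\<exists>k'. (g^^k') x \<in> B \<and> (\<forall>m<k'. (g^^m) x \<in> A)"
proof -
  have ex: "\<exists>k. (g^^k) x \<notin> A" using assms(3,4) by blast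
  define k' where "k' = (LEAST k. (g^^k) x \<notin> A)"
  have nA: "(g^^k') x \<notin> A" unfolding k'_def by (rule LeastI_ex[OF ex])
  have bef: "\<forall>m<k'. (g^^m) x \<in> A" unfolding k'_def using not_less_Least by blast
  have "k' \<noteq> 0"
  proof
    assume "k' = 0" with nA assms(2) show False by simp
  qed
  then obtain q where q: "k' = Suc q" by (cases k') auto
  have "(g^^q) x \<in> A" using bef q by simp
  then have "(g^^k') x \<in> A \<union> B" using assms(1) q by simp
  with nA bef show ?thesis by blast
qed

lemma funpow_invariant:
  assumes "\<And>y. y \<in> S \<Longrightarrow> g y \<in> S" "(g^^m) x \<in> S"
  shows "(g^^(m+d)) x \<in> S"
  by (induction d) (use assms in auto)

lemma funpow_period:
  assumes "(g^^k) x = x"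
  shows "(g^^(k*q)) x = x"
proof (induction q)
  case 0 then show ?case by simp
next
  case (Suc q)
  have "(g^^(k*Suc q)) x = (g^^k) ((g^^(k*q)) x)"
    by (simp add: funpow_add)
  then show ?case using Suc assms by simp
qed

lemma funpow_pigeon:
  assumes "\<And>m. (g^^m) x \<in> R" "finite R"
  shows "\<exists>a b. a < b \<and> (g^^a) x = (g^^b) x"
proof -
  let ?h = "\<lambda>m. (g^^m) x"
  have "?h ` {..card R} \<subseteq> R" using assms(1) by auto
  hence "card (?h ` {..card R}) \<le> card R" by (rule card_mono[OF assms(2)])
  hence "\<not> inj_on ?h {..card R}" by (intro pigeonhole) simp
  then obtain a b where "a \<noteq> b" "?h a = ?h b" unfolding inj_on_def by blast
  then show ?thesis by (metis linorder_neqE_nat)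
qed

definition acyc :: "nat set \<Rightarrow> nat set \<Rightarrow> (nat \<Rightarrow> nat) set" where
  "acyc R T = {g \<in> R \<rightarrow>\<^sub>E (R \<union> T). \<forall>x\<in>R. \<exists>k. (g^^k) x \<in> T}"

definition Nf :: "nat \<Rightarrow> nat \<Rightarrow> nat" where
  "Nf k t = (if k = 0 then 1 else t * (k+t)^(k-1))"

definition mrg :: "nat set \<Rightarrow> (nat\<Rightarrow>nat) \<Rightarrow> (nat\<Rightarrow>nat) \<Rightarrow> nat \<Rightarrow> nat" where
  "mrg L a b = (\<lambda>x. if x \<in> L then a x else b x)"

lemma finite_acyc: "finite R \<Longrightarrow> finite T \<Longrightarrow> finite (acyc R T)"
  unfolding acyc_def by (rule finite_subset[of _ "R \<rightarrow>\<^sub>E (R \<union> T)"]) (auto intro: finite_PiE)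

lemma mrg_in_acyc:
  assumes "L \<subseteq> R" "R \<inter> T = {}" "a \<in> L \<rightarrow>\<^sub>E T" "b \<in> acyc (R - L) L"
  shows "mrg L a b \<in> acyc R T"
proof -
  let ?g = "mrg L a b"
  have bmap: "b \<in> (R - L) \<rightarrow>\<^sub>E ((R - L) \<union> L)" and breach: "\<forall>x\<in>R-L. \<exists>k. (b^^k) x \<in> L"
    using assms(4) unfolding acyc_def by auto
  have "?g \<in> R \<rightarrow>\<^sub>E (R \<union> T)"
    using assms(1,3) bmap unfolding mrg_def by (auto simp: PiE_def Pi_def extensional_def)
  moreover have "\<exists>k. (?g^^k) x \<in> T" if x: "x \<in> R" for x
  proof (cases "x \<in> L")
    case True
    then have "(?g^^1) x \<in> T" using assms(3) by (auto simp: mrg_def)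
    then show ?thesis by blast
  next
    case False
    then have xA: "x \<in> R - L" using x by simp
    obtain k where "(b^^k) x \<in> L" using breach xA by blast
    then obtain k' where k': "(b^^k') x \<in> L" "\<forall>m<k'. (b^^m) x \<in> R - L"
      using first_hit[of "R - L" b L x k] bmap xA by blast
    have "(b^^k') x = (?g^^k') x"
      by (rule funpow_agree[where S="R - L"]) (use k' in \<open>auto simp: mrg_def\<close>)
    then have "(?g^^Suc k') x \<in> T" using k'(1) assms(3) by (auto simp: mrg_def)
    then show ?thesis by blast
  qed
  ultimately show ?thesis unfolding acyc_def by blast
qed

lemma mrg_L:
  assumes "L \<subseteq> R" "R \<inter> T = {}" "a \<in> L \<rightarrow>\<^sub>E T" "b \<in> acyc (R - L) L"
  shows "{x\<in>R. mrg L a b x \<in> T} = L"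
proof (intro equalityI subsetI)
  have bmap: "b \<in> (R - L) \<rightarrow>\<^sub>E ((R - L) \<union> L)"
    using assms(4) unfolding acyc_def by auto
  fix x assume "x \<in> {x\<in>R. mrg L a b x \<in> T}"
  then have x: "x \<in> R" "mrg L a b x \<in> T" by auto
  show "x \<in> L"
  proof (rule ccontr)
    assume nL: "x \<notin> L"
    then have "b x \<in> R" using bmap x(1) assms(1) by (auto simp: PiE_iff)
    moreover have "mrg L a b x = b x" using nL by (simp add: mrg_def)
    ultimately show False using x(2) assms(2) by auto
  qed
next
  fix x assume "x \<in> L"
  then show "x \<in> {x\<in>R. mrg L a b x \<in> T}" using assms(1,3) by (auto simp: mrg_def PiE_iff)
qed

lemma mrg_inj:
  assumes "a \<in> L \<rightarrow>\<^sub>E T" "b \<in> acyc (R - L) L" "a' \<in> L \<rightarrow>\<^sub>E T" "b' \<in> acyc (R - L) L"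
    "mrg L a b = mrg L a' b'"
  shows "a = a' \<and> b = b'"
proof
  show "a = a'"
  proof
    fix x show "a x = a' x"
    proof (cases "x \<in> L")
      case True then show ?thesis using fun_cong[OF assms(5), of x] by (simp add: mrg_def)
    next
      case False then show ?thesis using PiE_arb[OF assms(1)] PiE_arb[OF assms(3)] by simp
    qed
  qed
  have b1: "b \<in> (R - L) \<rightarrow>\<^sub>E ((R - L) \<union> L)" "b' \<in> (R - L) \<rightarrow>\<^sub>E ((R - L) \<union> L)"
    using assms(2,4) unfolding acyc_def by auto
  show "b = b'"
  proof
    fix x show "b x = b' x"
    proof (cases "x \<in> R - L")
      case True then show ?thesis using fun_cong[OF assms(5), of x] by (simp add: mrg_def)
    next
      case False then show ?thesis using PiE_arb[OF b1(1)] PiE_arb[OF b1(2)] by simp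
    qed
  qed
qed

lemma acyc_decomp:
  assumes "finite R" "R \<inter> T = {}" "R \<noteq> {}"
  shows "acyc R T = (\<Union>L\<in>{L. L \<subseteq> R \<and> L \<noteq> {}}. (\<lambda>(a,b). mrg L a b) ` ((L \<rightarrow>\<^sub>E T) \<times> acyc (R - L) L))"
proof
  show "(\<Union>L\<in>{L. L \<subseteq> R \<and> L \<noteq> {}}. (\<lambda>(a,b). mrg L a b) ` ((L \<rightarrow>\<^sub>E T) \<times> acyc (R - L) L)) \<subseteq> acyc R T"
  proof
    fix g assume "g \<in> (\<Union>L\<in>{L. L \<subseteq> R \<and> L \<noteq> {}}. (\<lambda>(a,b). mrg L a b) ` ((L \<rightarrow>\<^sub>E T) \<times> acyc (R - L) L))"
    then obtain L where L: "L \<in> {L. L \<subseteq> R \<and> L \<noteq> {}}"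
      and gL: "g \<in> (\<lambda>(a,b). mrg L a b) ` ((L \<rightarrow>\<^sub>E T) \<times> acyc (R - L) L)" by (rule UN_E)
    from gL obtain p where p: "p \<in> (L \<rightarrow>\<^sub>E T) \<times> acyc (R - L) L" "g = (\<lambda>(a,b). mrg L a b) p" by (rule imageE) simp
    obtain a b where ab: "p = (a, b)" by (cases p)
    have "mrg L a b \<in> acyc R T"
      by (rule mrg_in_acyc[OF _ assms(2)]) (use L p(1) ab in auto)
    then show "g \<in> acyc R T" using p(2) ab by simp
  qed
next
  show "acyc R T \<subseteq> (\<Union>L\<in>{L. L \<subseteq> R \<and> L \<noteq> {}}. (\<lambda>(a,b). mrg L a b) ` ((L \<rightarrow>\<^sub>E T) \<times> acyc (R - L) L))"
  proof
    fix g assume g: "g \<in> acyc R T"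
    have gmap: "g \<in> R \<rightarrow>\<^sub>E (R \<union> T)" and greach: "\<forall>x\<in>R. \<exists>k. (g^^k) x \<in> T"
      using g unfolding acyc_def by auto
    have gm: "\<And>y. y \<in> R \<Longrightarrow> g y \<in> R \<union> T" using gmap by auto
    define L where "L = {x\<in>R. g x \<in> T}"
    have fh: "\<exists>q. (g^^Suc q) x \<in> T \<and> (\<forall>m\<le>q. (g^^m) x \<in> R)" if x: "x \<in> R" for x
    proof -
      obtain k where "(g^^k) x \<in> T" using greach x by blast
      then obtain k' where k': "(g^^k') x \<in> T" "\<forall>m<k'. (g^^m) x \<in> R"
        using first_hit[of R g T x k] gm x assms(2) by blast
      have "k' \<noteq> 0" using k'(1) x assms(2) by (cases k') auto
      then obtain q where "k' = Suc q" by (cases k') auto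
      then show ?thesis using k' by auto
    qed
    have LN: "L \<noteq> {}"
    proof -
      obtain x where "x \<in> R" using assms(3) by blast
      then obtain q where q: "(g^^Suc q) x \<in> T" "\<forall>m\<le>q. (g^^m) x \<in> R" using fh by blast
      then have "(g^^q) x \<in> L" unfolding L_def by auto
      then show ?thesis by blast
    qed
    have "L \<subseteq> R" unfolding L_def by auto
    have ha: "restrict g L \<in> L \<rightarrow>\<^sub>E T" unfolding L_def by auto
    have hb: "restrict g (R - L) \<in> acyc (R - L) L"
    proof -
      have "restrict g (R - L) \<in> (R - L) \<rightarrow>\<^sub>E ((R - L) \<union> L)"
        using gm unfolding L_def by auto
      moreover have "\<exists>k. (restrict g (R - L) ^^ k) x \<in> L" if x: "x \<in> R - L" for x
      proof -
        obtain q where q: "(g^^Suc q) x \<in> T" "\<forall>m\<le>q. (g^^m) x \<in> R" using fh x by blast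
        have "(g^^m) x \<in> R - L" if "m < q" for m
        proof -
          have "Suc m \<le> q" using that by simp
          then have "(g^^Suc m) x \<in> R" using q(2) by blast
          then have "g ((g^^m) x) \<notin> T" using assms(2) by auto
          then show ?thesis using q(2) that unfolding L_def by auto
        qed
        then have "(g^^q) x = (restrict g (R - L) ^^ q) x"
          by (intro funpow_agree[where S="R - L"]) auto
        moreover have "(g^^q) x \<in> L" using q unfolding L_def by auto
        ultimately show ?thesis by metis
      qed
      ultimately show ?thesis unfolding acyc_def by blast
    qed
    have hg: "g = mrg L (restrict g L) (restrict g (R - L))"
    proof
      fix x show "g x = mrg L (restrict g L) (restrict g (R - L)) x"
        using \<open>L \<subseteq> R\<close> PiE_arb[OF gmap, of x] by (cases "x \<in> R") (auto simp: mrg_def)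
    qed
    have "g \<in> (\<lambda>(a,b). mrg L a b) ` ((L \<rightarrow>\<^sub>E T) \<times> acyc (R - L) L)"
      apply (rule image_eqI[of _ _ "(restrict g L, restrict g (R - L))"])
       apply (simp only: prod.case, rule hg)
      using ha hb by blast
    then show "g \<in> (\<Union>L\<in>{L. L \<subseteq> R \<and> L \<noteq> {}}. (\<lambda>(a,b). mrg L a b) ` ((L \<rightarrow>\<^sub>E T) \<times> acyc (R - L) L))"
      using \<open>L \<noteq> {}\<close> \<open>L \<subseteq> R\<close> by blast
  qed
qed


lemma sum_subsets_card:
  fixes h :: "nat \<Rightarrow> nat"
  assumes "finite R"
  shows "(\<Sum>L\<in>{L. L \<subseteq> R \<and> L \<noteq> {}}. h (card L)) = (\<Sum>l\<in>{1..card R}. (card R choose l) * h l)"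
proof -
  let ?S = "{L. L \<subseteq> R \<and> L \<noteq> {}}"
  have fin: "finite ?S" using assms by (rule finite_subset[rotated, OF finite_Pow_iff[THEN iffD2]]) auto
  have img: "card ` ?S \<subseteq> {1..card R}"
  proof
    fix l assume "l \<in> card ` ?S"
    then obtain L where L: "L \<subseteq> R" "L \<noteq> {}" "l = card L" by auto
    have "finite L" using L(1) assms finite_subset by blast
    then have "card L \<ge> 1" using L(2) by (simp add: Suc_leI card_gt_0_iff)
    moreover have "card L \<le> card R" using L(1) assms by (rule card_mono[rotated])
    ultimately show "l \<in> {1..card R}" using L(3) by simp
  qed
  have "(\<Sum>L\<in>?S. h (card L)) = (\<Sum>l\<in>{1..card R}. \<Sum>L\<in>{L\<in>?S. card L = l}. h (card L))"
    by (rule sum.group[symmetric, OF fin _ img]) simp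
  also have "\<dots> = (\<Sum>l\<in>{1..card R}. (card R choose l) * h l)"
  proof (rule sum.cong[OF refl])
    fix l assume l: "l \<in> {1..card R}"
    have eq: "{L\<in>?S. card L = l} = {L. L \<subseteq> R \<and> card L = l}" using l by auto
    have "(\<Sum>L\<in>{L\<in>?S. card L = l}. h (card L)) = (\<Sum>L\<in>{L. L \<subseteq> R \<and> card L = l}. h l)"
      unfolding eq by (rule sum.cong) auto
    also have "\<dots> = (card R choose l) * h l" using n_subsets[OF assms, of l] by simp
    finally show "(\<Sum>L\<in>{L\<in>?S. card L = l}. h (card L)) = (card R choose l) * h l" .
  qed
  finally show ?thesis .
qed

lemma nf_term:
  assumes "l' \<le> m"
  shows "(Suc m choose Suc l') * (t^Suc l' * Nf (m - l') (Suc l')) = t * ((m choose l') * t^l' * (Suc m)^(m - l'))"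
proof (cases "l' = m")
  case True then show ?thesis by (simp add: Nf_def)
next
  case False
  then have lt: "l' < m" using assms by simp
  then have nf: "Nf (m - l') (Suc l') = Suc l' * (Suc m)^(m - l' - 1)"
    by (simp add: Nf_def)
  have pw: "Suc m * (Suc m)^(m - l' - 1) = (Suc m)^(m - l')"
    using lt by (metis Suc_diff_Suc diff_Suc_1 diff_diff_left plus_1_eq_Suc power_Suc)
  have "(Suc m choose Suc l') * (t^Suc l' * Nf (m - l') (Suc l'))
      = (Suc l' * (Suc m choose Suc l')) * t^Suc l' * (Suc m)^(m - l' - 1)"
    unfolding nf by (simp add: algebra_simps)
  also have "\<dots> = (m choose l') * t^Suc l' * (Suc m * (Suc m)^(m - l' - 1))"
    unfolding Suc_times_binomial by (simp add: algebra_simps)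
  also have "\<dots> = t * ((m choose l') * t^l' * (Suc m)^(m - l'))"
    unfolding pw by (simp add: algebra_simps)
  finally show ?thesis .
qed

lemma nf_rec:
  assumes "k \<ge> 1"
  shows "(\<Sum>l\<in>{1..k}. (k choose l) * (t^l * Nf (k-l) l)) = Nf k t"
proof -
  obtain m where k: "k = Suc m" using assms by (cases k) auto
  have "(\<Sum>l\<in>{1..k}. (k choose l) * (t^l * Nf (k-l) l))
      = (\<Sum>l'\<in>{0..m}. (Suc m choose Suc l') * (t^Suc l' * Nf (m - l') (Suc l')))"
    by (simp only: k One_nat_def sum.shift_bounds_cl_Suc_ivl diff_Suc_Suc)
  also have "\<dots> = (\<Sum>l'\<in>{0..m}. t * ((m choose l') * t^l' * (Suc m)^(m - l')))"
    by (rule sum.cong[OF refl], rule nf_term) simp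
  also have "\<dots> = t * (\<Sum>l'\<le>m. (m choose l') * t^l' * (Suc m)^(m - l'))"
    by (simp add: sum_distrib_left atLeast0AtMost)
  also have "\<dots> = t * (t + Suc m)^m"
    using binomial_ring[of t "Suc m" m] by simp
  also have "\<dots> = Nf k t" unfolding k Nf_def by (simp add: add.commute)
  finally show ?thesis .
qed

lemma card_acyc:
  "finite R \<Longrightarrow> finite T \<Longrightarrow> R \<inter> T = {} \<Longrightarrow> card (acyc R T) = Nf (card R) (card T)"
proof (induction "card R" arbitrary: R T rule: less_induct)
  case less
  show ?case
  proof (cases "R = {}")
    case True
    then have "acyc R T = {\<lambda>x. undefined}" unfolding acyc_def by auto
    then show ?thesis using True by (simp add: Nf_def)
  next
    case False
    let ?S = "{L. L \<subseteq> R \<and> L \<noteq> {}}"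
    let ?A = "\<lambda>L. (\<lambda>(a,b). mrg L a b) ` ((L \<rightarrow>\<^sub>E T) \<times> acyc (R - L) L)"
    have finS: "finite ?S" using less.prems(1) by (rule finite_subset[rotated, OF finite_Pow_iff[THEN iffD2]]) auto
    have finL: "finite L" if "L \<in> ?S" for L using that less.prems(1) finite_subset by auto
    have cardA: "card (?A L) = card T ^ card L * Nf (card R - card L) (card L)" if L: "L \<in> ?S" for L
    proof -
      have LR: "L \<subseteq> R" "L \<noteq> {}" using L by auto
      have "card (?A L) = card ((L \<rightarrow>\<^sub>E T) \<times> acyc (R - L) L)"
      proof (rule card_image)
        show "inj_on (\<lambda>(a,b). mrg L a b) ((L \<rightarrow>\<^sub>E T) \<times> acyc (R - L) L)"
          using mrg_inj[of _ L T _ R] by (auto simp: inj_on_def)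
      qed
      also have "\<dots> = card T ^ card L * card (acyc (R - L) L)"
        by (simp add: card_cartesian_product card_PiE finL[OF L])
      also have "card (acyc (R - L) L) = Nf (card (R - L)) (card L)"
      proof (rule less.hyps)
        have "card L > 0" using finL[OF L] LR(2) by auto
        then show "card (R - L) < card R"
          using card_mono[OF less.prems(1) LR(1)] card_Diff_subset[OF finL[OF L] LR(1)] by linarith
      qed (use less.prems(1) finL[OF L] in auto)
      also have "card (R - L) = card R - card L" using LR(1) finL[OF L] by (simp add: card_Diff_subset)
      finally show ?thesis .
    qed
    have disj: "\<forall>L1\<in>?S. \<forall>L2\<in>?S. L1 \<noteq> L2 \<longrightarrow> ?A L1 \<inter> ?A L2 = {}"
    proof (intro ballI impI)
      fix L1 L2 assume L1: "L1 \<in> ?S" and L2: "L2 \<in> ?S" and ne: "L1 \<noteq> L2"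
      show "?A L1 \<inter> ?A L2 = {}"
      proof (rule ccontr)
        assume "?A L1 \<inter> ?A L2 \<noteq> {}"
        then obtain a1 b1 a2 b2 where
          h1: "a1 \<in> L1 \<rightarrow>\<^sub>E T" "b1 \<in> acyc (R - L1) L1" and
          h2: "a2 \<in> L2 \<rightarrow>\<^sub>E T" "b2 \<in> acyc (R - L2) L2" and eq: "mrg L1 a1 b1 = mrg L2 a2 b2"
          by auto
        have "L1 = {x\<in>R. mrg L1 a1 b1 x \<in> T}" using mrg_L[of L1 R T a1 b1] L1 h1 less.prems(3) by auto
        also have "\<dots> = L2" unfolding eq using mrg_L[of L2 R T a2 b2] L2 h2 less.prems(3) by auto
        finally show False using ne by simp
      qed
    qed
    have "card (acyc R T) = card (\<Union>L\<in>?S. ?A L)"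
      using acyc_decomp[OF less.prems(1,3) False] by simp
    also have "\<dots> = (\<Sum>L\<in>?S. card (?A L))"
    proof (rule card_UN_disjoint[OF finS _ disj])
      show "\<forall>L\<in>?S. finite (?A L)"
      proof
        fix L assume "L \<in> ?S"
        then have "finite L" "finite (R - L)" using finL less.prems(1) by auto
        then show "finite (?A L)"
          using less.prems(2) by (intro finite_imageI finite_cartesian_product finite_PiE finite_acyc) auto
      qed
    qed
    also have "\<dots> = (\<Sum>L\<in>?S. card T ^ card L * Nf (card R - card L) (card L))"
      by (rule sum.cong[OF refl]) (rule cardA)
    also have "\<dots> = (\<Sum>l\<in>{1..card R}. (card R choose l) * (card T ^ l * Nf (card R - l) l))"
      by (rule sum_subsets_card[OF less.prems(1)])
    also have "\<dots> = Nf (card R) (card T)"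
    proof (rule nf_rec)
      show "card R \<ge> 1" using False less.prems(1) by (simp add: Suc_leI card_gt_0_iff)
    qed
    finally show ?thesis .
  qed
qed


definition perR :: "nat set \<Rightarrow> (nat\<Rightarrow>nat) \<Rightarrow> nat \<Rightarrow> bool" where
  "perR R g x \<longleftrightarrow> x \<in> R \<and> (\<exists>k\<ge>1. (g^^k) x = x) \<and> (\<forall>m. (g^^m) x \<in> R)"

definition Gp :: "nat set \<Rightarrow> nat set \<Rightarrow> nat \<Rightarrow> (nat\<Rightarrow>nat) set" where
  "Gp R T p = {g \<in> R \<rightarrow>\<^sub>E (R \<union> T). card {x. perR R g x} = p}"

lemma perm_cycle:
  assumes "s permutes P" "finite P" "x \<in> P"
  shows "\<exists>k\<ge>1. (s^^k) x = x"
proof -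
  have it: "(s^^m) x \<in> P" for m
    by (induction m) (simp_all add: assms(3) permutes_in_image[OF assms(1)])
  obtain a b where ab: "a < b" "(s^^a) x = (s^^b) x" using funpow_pigeon[OF it assms(2)] by blast
  have "(s^^b) x = (s^^(a + (b-a))) x" using ab(1) by simp
  also have "\<dots> = (s^^a) ((s^^(b-a)) x)" by (simp add: funpow_add)
  finally have "(s^^b) x = (s^^a) ((s^^(b-a)) x)" .
  then have "(s^^a) x = (s^^a) ((s^^(b-a)) x)" using ab(2) by simp
  moreover have "inj (s^^a)" using permutes_inj[OF assms(1)] by simp
  ultimately have "(s^^(b-a)) x = x" by (metis injD)
  then show ?thesis using ab(1) by (intro exI[of _ "b-a"]) auto
qed

lemma mrg_perm_map:
  assumes "s permutes P" "P \<subseteq> R" "h \<in> acyc (R - P) (T \<union> P)"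
  shows "mrg P s h \<in> R \<rightarrow>\<^sub>E (R \<union> T)"
proof -
  have hm: "h \<in> (R - P) \<rightarrow>\<^sub>E ((R - P) \<union> (T \<union> P))" using assms(3) unfolding acyc_def by auto
  show ?thesis
  proof (rule PiE_I)
    fix x assume "x \<in> R"
    then show "mrg P s h x \<in> R \<union> T"
      using hm permutes_in_image[OF assms(1)] assms(2) by (cases "x \<in> P") (auto simp: mrg_def)
  next
    fix x assume "x \<notin> R"
    then show "mrg P s h x = undefined"
      using PiE_arb[OF hm, of x] assms(2) by (auto simp: mrg_def)
  qed
qed

lemma mrg_perm_per:
  assumes "s permutes P" "P \<subseteq> R" "h \<in> acyc (R - P) (T \<union> P)" "finite R" "R \<inter> T = {}"
  shows "{x. perR R (mrg P s h) x} = P"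
proof -
  let ?g = "mrg P s h"
  have finP: "finite P" using assms(2,4) finite_subset by blast
  have hm: "h \<in> (R - P) \<rightarrow>\<^sub>E ((R - P) \<union> (T \<union> P))" and hr: "\<forall>x\<in>R-P. \<exists>k. (h^^k) x \<in> T \<union> P"
    using assms(3) unfolding acyc_def by auto
  have gP: "?g y \<in> P" if "y \<in> P" for y
    using that permutes_in_image[OF assms(1)] by (simp add: mrg_def)
  have itP: "(?g^^m) x \<in> P" if "x \<in> P" for x m
    by (induction m) (use that gP in auto)
  show ?thesis
  proof (intro equalityI subsetI)
    fix x assume "x \<in> P"
    then have x: "x \<in> P" .
    obtain k where k: "k \<ge> 1" "(s^^k) x = x" using perm_cycle[OF assms(1) finP x] by blast
    have sP: "(s^^m) x \<in> P" for m
      by (induction m) (simp_all add: x permutes_in_image[OF assms(1)])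
    have "(s^^k) x = (?g^^k) x"
      by (rule funpow_agree[where S=P]) (use sP in \<open>auto simp: mrg_def\<close>)
    then have "(?g^^k) x = x" using k by simp
    then show "x \<in> {x. perR R ?g x}"
      unfolding perR_def using k(1) itP[OF x] x assms(2) by auto
  next
    fix x assume "x \<in> {x. perR R ?g x}"
    then have xR: "x \<in> R" and per: "\<exists>k\<ge>1. (?g^^k) x = x" and allR: "\<forall>m. (?g^^m) x \<in> R"
      unfolding perR_def by auto
    show "x \<in> P"
    proof (rule ccontr)
      assume xP: "x \<notin> P"
      obtain k0 where "(h^^k0) x \<in> T \<union> P" using hr xR xP by blast
      then obtain k' where k': "(h^^k') x \<in> T \<union> P" "\<forall>m<k'. (h^^m) x \<in> R - P"
        using first_hit[of "R - P" h "T \<union> P" x k0] hm xR xP assms(5) by blast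
      have "(h^^k') x = (?g^^k') x"
        by (rule funpow_agree[where S="R - P"]) (use k' in \<open>auto simp: mrg_def\<close>)
      then have inP: "(?g^^k') x \<in> P" using k'(1) allR assms(5) by auto
      obtain k where k: "k \<ge> 1" "(?g^^k) x = x" using per by blast
      have "(?g^^(k' + (k*k' - k'))) x \<in> P"
        by (rule funpow_invariant[OF _ inP]) (rule gP)
      moreover have "k' + (k*k' - k') = k*k'" using k(1) by (metis le_add_diff_inverse mult_le_mono1 mult_1)
      ultimately have "(?g^^(k*k')) x \<in> P" by simp
      then show False using funpow_period[OF k(2), of k'] xP by simp
    qed
  qed
qed


lemma perR_succ:
  assumes "perR R g x"
  shows "perR R g (g x)"
proof -
  from assms have xR: "x \<in> R" and k: "\<exists>k\<ge>1. (g^^k) x = x" and all: "\<forall>m. (g^^m) x \<in> R"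
    unfolding perR_def by auto
  have "g x \<in> R" using all[rule_format, of 1] by simp
  moreover have "\<exists>k\<ge>1. (g^^k) (g x) = g x"
    using k by (metis funpow_swap1)
  moreover have "\<forall>m. (g^^m) (g x) \<in> R"
  proof
    fix m show "(g^^m) (g x) \<in> R" using all[rule_format, of "Suc m"] by (simp add: funpow_swap1)
  qed
  ultimately show ?thesis unfolding perR_def by blast
qed

lemma perR_inj:
  assumes "perR R g a" "perR R g b" "g a = g b"
  shows "a = b"
proof -
  obtain ka where ka: "ka \<ge> 1" "(g^^ka) a = a" using assms(1) unfolding perR_def by blast
  obtain kb where kb: "kb \<ge> 1" "(g^^kb) b = b" using assms(2) unfolding perR_def by blast
  define K where "K = ka * kb"
  have K1: "K \<ge> 1" unfolding K_def using ka kb by simp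
  have Ka: "(g^^K) a = a" unfolding K_def by (rule funpow_period[OF ka(2)])
  have Kb: "(g^^K) b = b" unfolding K_def using funpow_period[OF kb(2), of ka] by (simp add: mult.commute)
  obtain K' where K': "K = Suc K'" using K1 by (cases K) auto
  have "a = (g^^K') (g a)" using Ka unfolding K' by (simp add: funpow_swap1)
  also have "\<dots> = (g^^K') (g b)" using assms(3) by simp
  also have "\<dots> = b" using Kb unfolding K' by (simp add: funpow_swap1)
  finally show ?thesis .
qed

lemma Gp_cover:
  assumes "g \<in> R \<rightarrow>\<^sub>E (R \<union> T)" "finite R" "R \<inter> T = {}"
  defines "P \<equiv> {x. perR R g x}"
  shows "P \<subseteq> R" "(\<lambda>x. if x \<in> P then g x else x) permutes P"
    "restrict g (R - P) \<in> acyc (R - P) (T \<union> P)"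
    "g = mrg P (\<lambda>x. if x \<in> P then g x else x) (restrict g (R - P))"
proof -
  show PR: "P \<subseteq> R" unfolding P_def perR_def by auto
  have finP: "finite P" using PR assms(2) finite_subset by blast
  have gm: "\<And>y. y \<in> R \<Longrightarrow> g y \<in> R \<union> T" using assms(1) by auto
  let ?s = "\<lambda>x. if x \<in> P then g x else x"
  show "?s permutes P"
  proof (rule bij_imp_permutes)
    have inj: "inj_on ?s P" unfolding inj_on_def P_def using perR_inj by auto
    have sub: "?s ` P \<subseteq> P" unfolding P_def using perR_succ by auto
    have "?s ` P = P" by (rule endo_inj_surj[OF finP sub inj])
    then show "bij_betw ?s P P" using inj unfolding bij_betw_def by blast
  qed simp
  show "restrict g (R - P) \<in> acyc (R - P) (T \<union> P)"
  proof -
    have "restrict g (R - P) \<in> (R - P) \<rightarrow>\<^sub>E ((R - P) \<union> (T \<union> P))"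
      using gm by auto
    moreover have "\<exists>k. (restrict g (R - P) ^^ k) x \<in> T \<union> P" if x: "x \<in> R - P" for x
    proof -
      have "\<exists>k. (g^^k) x \<in> T \<union> P"
      proof (cases "\<forall>m. (g^^m) x \<in> R")
        case True
        have it: "\<And>m. (g^^m) x \<in> R" using True by blast
        obtain a b where ab: "a < b" "(g^^a) x = (g^^b) x" using funpow_pigeon[OF it assms(2)] by blast
        have eqb: "(g^^(b-a)) ((g^^a) x) = (g^^b) x"
        proof -
          have "(g^^(b-a)) ((g^^a) x) = (g^^(b - a + a)) x" by (simp add: funpow_add)
          also have "b - a + a = b" using ab(1) by simp
          finally show ?thesis .
        qed
        have "perR R g ((g^^a) x)" unfolding perR_def
        proof (intro conjI)
          show "(g^^a) x \<in> R" using True by blast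
          show "\<exists>k\<ge>1. (g^^k) ((g^^a) x) = (g^^a) x"
          proof (intro exI[of _ "b-a"] conjI)
            show "b - a \<ge> 1" using ab(1) by simp
            show "(g^^(b-a)) ((g^^a) x) = (g^^a) x" using eqb ab(2) by simp
          qed
          show "\<forall>m. (g^^m) ((g^^a) x) \<in> R"
          proof
            fix m
            have "(g^^m) ((g^^a) x) = (g^^(m+a)) x" by (simp add: funpow_add)
            then show "(g^^m) ((g^^a) x) \<in> R" using True by simp
          qed
        qed
        then show ?thesis unfolding P_def by blast
      next
        case False
        then obtain m where m: "(g^^m) x \<notin> R" by blast
        have "\<exists>k. (g^^k) x \<notin> R" using m by blast
        define k where "k = (LEAST k. (g^^k) x \<notin> R)"
        have nR: "(g^^k) x \<notin> R" unfolding k_def by (rule LeastI_ex) (use m in blast)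
        have bef: "\<forall>m<k. (g^^m) x \<in> R" unfolding k_def using not_less_Least by blast
        have "k \<noteq> 0" using nR x by (cases k) auto
        then obtain q where q: "k = Suc q" by (cases k) auto
        have "(g^^q) x \<in> R" using bef q by simp
        then have "(g^^k) x \<in> R \<union> T" using gm q by simp
        then show ?thesis using nR by blast
      qed
      then obtain k0 where k0: "(g^^k0) x \<in> T \<union> P" by blast
      have gm2: "\<And>y. y \<in> R - P \<Longrightarrow> g y \<in> (R - P) \<union> (T \<union> P)" using gm by auto
      have dj: "(R - P) \<inter> (T \<union> P) = {}" using assms(3) by auto
      obtain k' where k': "(g^^k') x \<in> T \<union> P" "\<forall>m<k'. (g^^m) x \<in> R - P"
        using first_hit[of "R - P" g "T \<union> P" x k0, OF gm2 x k0 dj] by blast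
      have "(g^^k') x = (restrict g (R - P) ^^ k') x"
        by (rule funpow_agree[where S="R - P"]) (use k' in auto)
      then show ?thesis using k'(1) by metis
    qed
    ultimately show ?thesis unfolding acyc_def by blast
  qed
  show "g = mrg P ?s (restrict g (R - P))"
  proof
    fix x show "g x = mrg P ?s (restrict g (R - P)) x"
      using PR PiE_arb[OF assms(1), of x] by (cases "x \<in> R") (auto simp: mrg_def)
  qed
qed


lemma mrg_perm_inj:
  assumes "s permutes P" "h \<in> acyc (R - P) (T \<union> P)" "s' permutes P" "h' \<in> acyc (R - P) (T \<union> P)"
    "mrg P s h = mrg P s' h'"
  shows "s = s' \<and> h = h'"
proof
  show "s = s'"
  proof
    fix x show "s x = s' x"
    proof (cases "x \<in> P")
      case True then show ?thesis using fun_cong[OF assms(5), of x] by (simp add: mrg_def)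
    next
      case False then show ?thesis using permutes_not_in[OF assms(1)] permutes_not_in[OF assms(3)] by simp
    qed
  qed
  have b1: "h \<in> (R - P) \<rightarrow>\<^sub>E ((R - P) \<union> (T \<union> P))" "h' \<in> (R - P) \<rightarrow>\<^sub>E ((R - P) \<union> (T \<union> P))"
    using assms(2,4) unfolding acyc_def by auto
  show "h = h'"
  proof
    fix x show "h x = h' x"
    proof (cases "x \<in> R - P")
      case True then show ?thesis using fun_cong[OF assms(5), of x] by (simp add: mrg_def)
    next
      case False then show ?thesis using PiE_arb[OF b1(1)] PiE_arb[OF b1(2)] by simp
    qed
  qed
qed

lemma card_Gp:
  assumes "finite R" "finite T" "R \<inter> T = {}"
  shows "card (Gp R T p) = (card R choose p) * (fact p * Nf (card R - p) (card T + p))"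
proof -
  let ?S = "{P. P \<subseteq> R \<and> card P = p}"
  let ?A = "\<lambda>P. (\<lambda>(s,h). mrg P s h) ` ({s. s permutes P} \<times> acyc (R - P) (T \<union> P))"
  have finS: "finite ?S" using assms(1) by (rule finite_subset[rotated, OF finite_Pow_iff[THEN iffD2]]) auto
  have finP: "finite P" if "P \<in> ?S" for P using that assms(1) finite_subset by auto
  have dec: "Gp R T p = (\<Union>P\<in>?S. ?A P)"
  proof (intro equalityI subsetI)
    fix g assume g: "g \<in> Gp R T p"
    then have gm: "g \<in> R \<rightarrow>\<^sub>E (R \<union> T)" and cp: "card {x. perR R g x} = p" unfolding Gp_def by auto
    let ?P = "{x. perR R g x}"
    note cov = Gp_cover[OF gm assms(1,3)]
    have "g \<in> ?A ?P"
      apply (rule image_eqI[of _ _ "(\<lambda>x. if x \<in> ?P then g x else x, restrict g (R - ?P))"])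
       apply (simp only: prod.case, rule cov(4))
      using cov(2,3) by blast
    moreover have "?P \<in> ?S" using cov(1) cp by blast
    ultimately show "g \<in> (\<Union>P\<in>?S. ?A P)" by blast
  next
    fix g assume "g \<in> (\<Union>P\<in>?S. ?A P)"
    then obtain P where P: "P \<in> ?S" and gP: "g \<in> ?A P" by (rule UN_E)
    from gP obtain q where q: "q \<in> {s. s permutes P} \<times> acyc (R - P) (T \<union> P)" "g = (\<lambda>(s,h). mrg P s h) q"
      by (rule imageE) simp
    obtain s h where sh: "q = (s, h)" by (cases q)
    have s: "s permutes P" and h: "h \<in> acyc (R - P) (T \<union> P)" using q(1) sh by auto
    have PR: "P \<subseteq> R" using P by simp
    have "mrg P s h \<in> Gp R T p"
      unfolding Gp_def using mrg_perm_map[OF s PR h] mrg_perm_per[OF s PR h assms(1,3)] P by simp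
    then show "g \<in> Gp R T p" using q(2) sh by simp
  qed
  have disj: "\<forall>P1\<in>?S. \<forall>P2\<in>?S. P1 \<noteq> P2 \<longrightarrow> ?A P1 \<inter> ?A P2 = {}"
  proof (intro ballI impI)
    fix P1 P2 assume P1: "P1 \<in> ?S" and P2: "P2 \<in> ?S" and ne: "P1 \<noteq> P2"
    show "?A P1 \<inter> ?A P2 = {}"
    proof (rule ccontr)
      assume "?A P1 \<inter> ?A P2 \<noteq> {}"
      then obtain s1 h1 s2 h2 where
        h1: "s1 permutes P1" "h1 \<in> acyc (R - P1) (T \<union> P1)" and
        h2: "s2 permutes P2" "h2 \<in> acyc (R - P2) (T \<union> P2)" and eq: "mrg P1 s1 h1 = mrg P2 s2 h2"
        by auto
      have "P1 = {x. perR R (mrg P1 s1 h1) x}" using mrg_perm_per[OF h1(1) _ h1(2) assms(1,3)] P1 by simp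
      also have "\<dots> = P2" unfolding eq using mrg_perm_per[OF h2(1) _ h2(2) assms(1,3)] P2 by simp
      finally show False using ne by simp
    qed
  qed
  have cardA: "card (?A P) = fact p * Nf (card R - p) (card T + p)" if P: "P \<in> ?S" for P
  proof -
    have PR: "P \<subseteq> R" "card P = p" using P by auto
    have "card (?A P) = card ({s. s permutes P} \<times> acyc (R - P) (T \<union> P))"
    proof (rule card_image)
      show "inj_on (\<lambda>(s,h). mrg P s h) ({s. s permutes P} \<times> acyc (R - P) (T \<union> P))"
        using mrg_perm_inj[of _ P _ R T] by (auto simp: inj_on_def)
    qed
    also have "\<dots> = fact p * card (acyc (R - P) (T \<union> P))"
      using card_permutations[OF PR(2) finP[OF P]] by (simp add: card_cartesian_product)
    also have "card (acyc (R - P) (T \<union> P)) = Nf (card (R - P)) (card (T \<union> P))"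
      by (rule card_acyc) (use assms finP[OF P] PR in auto)
    also have "card (R - P) = card R - p" using PR finP[OF P] by (simp add: card_Diff_subset)
    also have "card (T \<union> P) = card T + p"
      using PR assms(2,3) finP[OF P] by (subst card_Un_disjoint) auto
    finally show ?thesis .
  qed
  have "card (Gp R T p) = (\<Sum>P\<in>?S. card (?A P))"
    unfolding dec
  proof (rule card_UN_disjoint[OF finS _ disj])
    show "\<forall>P\<in>?S. finite (?A P)"
    proof
      fix P assume "P \<in> ?S"
      then have f1: "finite P" using finP by blast
      have f2: "finite (R - P)" using assms(1) by blast
      have f3: "finite (T \<union> P)" using f1 assms(2) by blast
      show "finite (?A P)"
        by (rule finite_imageI, rule finite_cartesian_product, rule finite_permutations[OF f1], rule finite_acyc[OF f2 f3])
    qed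
  qed
  also have "\<dots> = (\<Sum>P\<in>?S. fact p * Nf (card R - p) (card T + p))"
    by (rule sum.cong[OF refl]) (rule cardA)
  also have "\<dots> = (card R choose p) * (fact p * Nf (card R - p) (card T + p))"
    using n_subsets[OF assms(1), of p] by simp
  finally show ?thesis .
qed


definition nx :: "nat \<Rightarrow> nat \<Rightarrow> nat \<Rightarrow> nat" where
  "nx i r q = (if Suc q < i then Suc q else r)"

lemma nx_lt: "r < i \<Longrightarrow> q < i \<Longrightarrow> nx i r q < i"
  by (simp add: nx_def)

lemma nx_pow_lt: "r < i \<Longrightarrow> q < i \<Longrightarrow> (nx i r ^^ k) q < i"
  by (induction k) (simp_all add: nx_lt)

lemma nx_pow_small: "m < i \<Longrightarrow> (nx i r ^^ m) 0 = m"
  by (induction m) (simp_all add: nx_def)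

lemma nx_cyc:
  assumes "r \<le> q" "q < i"
  shows "(nx i r ^^ d) q = r + (q - r + d) mod (i - r)"
proof (induction d)
  case 0 then show ?case using assms by simp
next
  case (Suc d)
  let ?t = "(q - r + d) mod (i - r)"
  have t: "?t < i - r" using assms by simp
  have "(nx i r ^^ Suc d) q = nx i r (r + ?t)" using Suc by simp
  also have "\<dots> = r + (q - r + Suc d) mod (i - r)"
  proof -
    have key: "nx i r (r + t) = r + (if Suc t = i - r then 0 else Suc t)" if "t < i - r" for t
      using that by (auto simp: nx_def)
    have "(q - r + Suc d) mod (i - r) = Suc (q - r + d) mod (i - r)" by simp
    also have "\<dots> = (if Suc ?t = i - r then 0 else Suc ?t)" by (rule mod_Suc)
    finally show ?thesis using key[OF t] by simp
  qed
  finally show ?case .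
qed

lemma nx_period:
  assumes "r \<le> q" "q < i"
  shows "(nx i r ^^ (i - r)) q = q"
proof -
  have "(nx i r ^^ (i - r)) q = r + (q - r + (i - r)) mod (i - r)" by (rule nx_cyc[OF assms])
  also have "\<dots> = r + (q - r) mod (i - r)" by simp
  also have "\<dots> = q" using assms by simp
  finally show ?thesis .
qed

lemma nx_grow:
  assumes "q < r" "r < i"
  shows "(nx i r ^^ Suc k) q > q"
proof (induction k)
  case 0 then show ?case using assms by (simp add: nx_def)
next
  case (Suc k)
  then show ?case using assms by (auto simp: nx_def simp del: funpow.simps) (simp_all add: nx_def)
qed


definition bld :: "nat \<Rightarrow> nat list \<Rightarrow> nat \<Rightarrow> (nat \<Rightarrow> nat) \<Rightarrow> nat \<Rightarrow> nat" where
  "bld n xs r g = (\<lambda>x. if x = Suc n then xs!0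
     else if x \<in> set xs then xs ! nx (length xs) r (THE q. q < length xs \<and> xs!q = x) else g x)"

context
  fixes n :: nat and xs :: "nat list" and r :: nat and g :: "nat \<Rightarrow> nat"
  assumes dxs: "distinct xs" and sxs: "set xs \<subseteq> {1..n}" and rl: "r < length xs"
begin

lemma the_idx: "q < length xs \<Longrightarrow> (THE q'. q' < length xs \<and> xs!q' = xs!q) = q"
  using dxs by (auto simp: nth_eq_iff_index_eq)

lemma bld_nth: "q < length xs \<Longrightarrow> bld n xs r g (xs!q) = xs!(nx (length xs) r q)"
proof -
  assume q: "q < length xs"
  then have "xs!q \<in> set xs" by simp
  then have "xs!q \<noteq> Suc n" using sxs by auto
  then show ?thesis using q the_idx[OF q] by (simp add: bld_def)
qed

lemma bld_top: "bld n xs r g (Suc n) = xs!0"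
  by (simp add: bld_def)

lemma bld_R: "x \<notin> set xs \<Longrightarrow> x \<noteq> Suc n \<Longrightarrow> bld n xs r g x = g x"
  by (simp add: bld_def)

lemma it_nth: "q < length xs \<Longrightarrow> (bld n xs r g ^^ k) (xs!q) = xs!((nx (length xs) r ^^ k) q)"
proof (induction k)
  case 0 then show ?case by simp
next
  case (Suc k)
  have lt: "(nx (length xs) r ^^ k) q < length xs" using nx_pow_lt[OF rl Suc.prems] .
  show ?case using Suc bld_nth[OF lt] by simp
qed

lemma it_top: "(bld n xs r g ^^ Suc k) (Suc n) = xs!((nx (length xs) r ^^ k) 0)"
proof -
  have l0: "0 < length xs" using rl by linarith
  have "(bld n xs r g ^^ Suc k) (Suc n) = (bld n xs r g ^^ k) (bld n xs r g (Suc n))"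
    by (simp add: funpow_swap1)
  also have "\<dots> = xs!((nx (length xs) r ^^ k) 0)" unfolding bld_top by (rule it_nth[OF l0])
  finally show ?thesis .
qed

lemma orbit_bld: "orbit_of (bld n xs r g) (Suc n) = insert (Suc n) (set xs)"
proof (intro equalityI subsetI)
  fix x assume "x \<in> orbit_of (bld n xs r g) (Suc n)"
  then obtain k where k: "x = (bld n xs r g ^^ k) (Suc n)" unfolding orbit_of_def by auto
  show "x \<in> insert (Suc n) (set xs)"
  proof (cases k)
    case 0 then show ?thesis using k by simp
  next
    case (Suc k')
    have l0: "0 < length xs" using rl by linarith
    have "(nx (length xs) r ^^ k') 0 < length xs" by (rule nx_pow_lt[OF rl l0])
    then show ?thesis using k Suc it_top by simp
  qed
next
  fix x assume x: "x \<in> insert (Suc n) (set xs)"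
  show "x \<in> orbit_of (bld n xs r g) (Suc n)"
  proof (cases "x = Suc n")
    case True then show ?thesis unfolding orbit_of_def by (auto intro: exI[of _ 0])
  next
    case False
    then obtain q where q: "q < length xs" "x = xs!q" using x by (auto simp: in_set_conv_nth)
    have "(bld n xs r g ^^ Suc q) (Suc n) = x" using it_top nx_pow_small[OF q(1)] q(2) by simp
    then show ?thesis unfolding orbit_of_def by blast
  qed
qed

lemma card_orbit_bld: "card (orbit_of (bld n xs r g) (Suc n)) = Suc (length xs)"
proof -
  have "Suc n \<notin> set xs" using sxs by auto
  then show ?thesis unfolding orbit_bld using dxs by (simp add: distinct_card)
qed

end


context
  fixes n :: nat and xs :: "nat list" and r :: nat and g :: "nat \<Rightarrow> nat"
  assumes dxs: "distinct xs" and sxs: "set xs \<subseteq> {1..n}" and rl: "r < length xs"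
    and gm: "g \<in> ({1..n} - set xs) \<rightarrow>\<^sub>E (({1..n} - set xs) \<union> set xs)"
begin

lemma bld_map: "bld n xs r g \<in> {1..Suc n} \<rightarrow>\<^sub>E {1..n}"
proof (rule PiE_I)
  fix x assume x: "x \<in> {1..Suc n}"
  show "bld n xs r g x \<in> {1..n}"
  proof (cases "x = Suc n")
    case True
    have "xs!0 \<in> set xs" using rl by (intro nth_mem) linarith
    then show ?thesis using True sxs by (auto simp: bld_top[OF dxs sxs rl])
  next
    case False
    show ?thesis
    proof (cases "x \<in> set xs")
      case True
      then obtain q where q: "q < length xs" "x = xs!q" by (auto simp: in_set_conv_nth)
      have "nx (length xs) r q < length xs" by (rule nx_lt[OF rl q(1)])
      then have "xs ! nx (length xs) r q \<in> set xs" by simp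
      then show ?thesis using q sxs bld_nth[OF dxs sxs rl q(1)] by auto
    next
      case nxs: False
      then have "x \<in> {1..n} - set xs" using x False by auto
      then have "g x \<in> ({1..n} - set xs) \<union> set xs" using PiE_mem[OF gm] by blast
      then show ?thesis using sxs bld_R[OF dxs sxs rl nxs False] by auto
    qed
  qed
next
  fix x assume x: "x \<notin> {1..Suc n}"
  then have "x \<noteq> Suc n" "x \<notin> set xs" using sxs by auto
  then show "bld n xs r g x = undefined"
    using bld_R[OF dxs sxs rl] PiE_arb[OF gm, of x] x by auto
qed

lemma per_top: "\<not> periodic_pt (bld n xs r g) (Suc n)"
proof
  assume "periodic_pt (bld n xs r g) (Suc n)"
  then obtain k where k: "k \<ge> 1" "(bld n xs r g ^^ k) (Suc n) = Suc n" unfolding periodic_pt_def by blast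
  then obtain k' where k': "k = Suc k'" by (cases k) auto
  have l0: "0 < length xs" using rl by linarith
  have "(nx (length xs) r ^^ k') 0 < length xs" by (rule nx_pow_lt[OF rl l0])
  then have "xs!((nx (length xs) r ^^ k') 0) \<in> set xs" by simp
  then show False using k(2) k' it_top[OF dxs sxs rl] sxs by auto
qed

lemma per_nth:
  assumes q: "q < length xs"
  shows "periodic_pt (bld n xs r g) (xs!q) \<longleftrightarrow> r \<le> q"
proof
  assume "periodic_pt (bld n xs r g) (xs!q)"
  then obtain k where k: "k \<ge> 1" "(bld n xs r g ^^ k) (xs!q) = xs!q" unfolding periodic_pt_def by blast
  then obtain k' where k': "k = Suc k'" by (cases k) auto
  show "r \<le> q"
  proof (rule ccontr)
    assume "\<not> r \<le> q"
    then have qr: "q < r" by simp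
    have gt: "(nx (length xs) r ^^ k) q > q" unfolding k' by (rule nx_grow[OF qr rl])
    have lt: "(nx (length xs) r ^^ k) q < length xs" by (rule nx_pow_lt[OF rl q])
    have "xs!((nx (length xs) r ^^ k) q) = xs!q" using k(2) it_nth[OF dxs sxs rl q] by simp
    then have "(nx (length xs) r ^^ k) q = q" using dxs lt q by (simp add: nth_eq_iff_index_eq)
    then show False using gt by simp
  qed
next
  assume rq: "r \<le> q"
  have "(bld n xs r g ^^ (length xs - r)) (xs!q) = xs!q"
    using it_nth[OF dxs sxs rl q] nx_period[OF rq q] by simp
  moreover have "length xs - r \<ge> 1" using rl by simp
  ultimately show "periodic_pt (bld n xs r g) (xs!q)" unfolding periodic_pt_def by blast
qed

lemma per_R:
  assumes x: "x \<in> {1..n} - set xs"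
  shows "periodic_pt (bld n xs r g) x \<longleftrightarrow> perR ({1..n} - set xs) g x"
proof -
  let ?f = "bld n xs r g"
  let ?R = "{1..n} - set xs"
  have fg: "?f y = g y" if "y \<in> ?R" for y using that bld_R[OF dxs sxs rl] by auto
  have fxs: "?f y \<in> set xs" if yx: "y \<in> set xs" for y
  proof -
    obtain q where q: "q < length xs" "xs!q = y" using yx in_set_conv_nth[of y xs] by blast
    have "?f (xs!q) = xs ! nx (length xs) r q" by (rule bld_nth[OF dxs sxs rl q(1)])
    moreover have "xs ! nx (length xs) r q \<in> set xs" using nx_lt[OF rl q(1)] by simp
    ultimately show ?thesis using q(2) by simp
  qed
  have fR: "?f y \<in> ?R \<union> set xs" if "y \<in> ?R" for y using fg[OF that] PiE_mem[OF gm that] by simp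
  show ?thesis
  proof
    assume "periodic_pt ?f x"
    then obtain k where k: "k \<ge> 1" "(?f ^^ k) x = x" unfolding periodic_pt_def by blast
    have inv: "(?f ^^ m) x \<in> ?R \<union> set xs" for m
    proof (induction m)
      case 0 then show ?case using x by simp
    next
      case (Suc m) then show ?case using fR fxs by auto
    qed
    have allR: "(?f ^^ m) x \<in> ?R" for m
    proof (rule ccontr)
      assume "(?f ^^ m) x \<notin> ?R"
      then have inx: "(?f ^^ m) x \<in> set xs" using inv[of m] by blast
      have "(?f ^^ (m + (k*m - m))) x \<in> set xs"
        by (rule funpow_invariant[OF _ inx]) (rule fxs)
      moreover have "m + (k*m - m) = k*m" using k(1) by (metis le_add_diff_inverse mult_le_mono1 mult_1)
      ultimately have "(?f ^^ (k*m)) x \<in> set xs" by simp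
      then show False using funpow_period[OF k(2), of m] x by simp
    qed
    have agree: "(?f ^^ m) x = (g ^^ m) x" for m
      by (rule funpow_agree[where S="?R"]) (use allR fg in auto)
    have "(g ^^ k) x = x" using k(2) agree[of k] by simp
    moreover have "\<forall>m. (g ^^ m) x \<in> ?R" using allR agree by simp
    ultimately show "perR ?R g x" unfolding perR_def using x k(1) by blast
  next
    assume "perR ?R g x"
    then obtain k where k: "k \<ge> 1" "(g ^^ k) x = x" and allR: "\<forall>m. (g ^^ m) x \<in> ?R"
      unfolding perR_def by blast
    have "(g ^^ k) x = (?f ^^ k) x"
      by (rule funpow_agree[where S="?R"]) (use allR fg in auto)
    then show "periodic_pt ?f x" unfolding periodic_pt_def using k by metis
  qed
qed

lemma per_set:
  "{x \<in> {1..Suc n}. periodic_pt (bld n xs r g) x}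
     = (\<lambda>q. xs!q) ` {r..<length xs} \<union> {x. perR ({1..n} - set xs) g x}"
proof (intro equalityI subsetI)
  fix x assume "x \<in> {x \<in> {1..Suc n}. periodic_pt (bld n xs r g) x}"
  then have x: "x \<in> {1..Suc n}" and p: "periodic_pt (bld n xs r g) x" by auto
  show "x \<in> (\<lambda>q. xs!q) ` {r..<length xs} \<union> {x. perR ({1..n} - set xs) g x}"
  proof (cases "x = Suc n")
    case True then show ?thesis using p per_top by simp
  next
    case False
    show ?thesis
    proof (cases "x \<in> set xs")
      case True
      then obtain q where q: "q < length xs" "x = xs!q" by (auto simp: in_set_conv_nth)
      then have "r \<le> q" using per_nth[OF q(1)] p by simp
      then show ?thesis using q by auto
    next
      case nxs: False
      then have "x \<in> {1..n} - set xs" using x False by auto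
      then show ?thesis using per_R p by auto
    qed
  qed
next
  fix x assume x: "x \<in> (\<lambda>q. xs!q) ` {r..<length xs} \<union> {x. perR ({1..n} - set xs) g x}"
  show "x \<in> {x \<in> {1..Suc n}. periodic_pt (bld n xs r g) x}"
  proof (cases "x \<in> (\<lambda>q. xs!q) ` {r..<length xs}")
    case True
    then obtain q where q: "r \<le> q" "q < length xs" "x = xs!q" by auto
    have "x \<in> set xs" using q by simp
    then have "x \<in> {1..Suc n}" using sxs by auto
    then show ?thesis using per_nth[OF q(2)] q by auto
  next
    case False
    then have pr: "perR ({1..n} - set xs) g x" using x by auto
    then have xR: "x \<in> {1..n} - set xs" unfolding perR_def by auto
    then show ?thesis using per_R[OF xR] pr by auto
  qed
qed

lemma card_per:
  "card {x \<in> {1..Suc n}. periodic_pt (bld n xs r g) x}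
     = (length xs - r) + card {x. perR ({1..n} - set xs) g x}"
proof -
  have c1: "card ((\<lambda>q. xs!q) ` {r..<length xs}) = length xs - r"
  proof -
    have "inj_on (\<lambda>q. xs!q) {r..<length xs}"
      using dxs by (auto simp: inj_on_def nth_eq_iff_index_eq)
    then show ?thesis by (simp add: card_image)
  qed
  have sub: "{x. perR ({1..n} - set xs) g x} \<subseteq> {1..n} - set xs" unfolding perR_def by auto
  have fin: "finite {x. perR ({1..n} - set xs) g x}" by (rule finite_subset[OF sub]) simp
  have dj: "(\<lambda>q. xs!q) ` {r..<length xs} \<inter> {x. perR ({1..n} - set xs) g x} = {}"
    using sub by auto
  show ?thesis unfolding per_set using c1 fin dj by (simp add: card_Un_disjoint)
qed

end


lemma Fset_surj:
  assumes fm: "f \<in> {1..Suc n} \<rightarrow>\<^sub>E {1..n}" and co: "card (orbit_of f (Suc n)) = Suc i"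
  shows "\<exists>xs r. distinct xs \<and> length xs = i \<and> set xs \<subseteq> {1..n} \<and> r < i \<and>
     restrict f ({1..n} - set xs) \<in> ({1..n} - set xs) \<rightarrow>\<^sub>E (({1..n} - set xs) \<union> set xs) \<and>
     f = bld n xs r (restrict f ({1..n} - set xs))"
proof -
  define a where "a k = (f^^k) (Suc n)" for k
  have fmem: "f y \<in> {1..n}" if "y \<in> {1..Suc n}" for y using PiE_mem[OF fm that] .
  have aSuc: "a (Suc k) = f (a k)" for k unfolding a_def by simp
  have aS: "a k \<in> {1..Suc n}" for k
  proof (induction k)
    case 0 then show ?case unfolding a_def by simp
  next
    case (Suc k) then show ?case using fmem[OF Suc] aSuc[of k] by auto
  qed
  have aN: "a (Suc k) \<in> {1..n}" for k using fmem[OF aS[of k]] aSuc[of k] by simp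
  have ex: "\<exists>m. a (Suc m) \<in> a ` {..m}"
  proof -
    have "\<And>m. (f^^m) (Suc n) \<in> {1..Suc n}" using aS unfolding a_def .
    then obtain p q where pq: "p < q" "(f^^p) (Suc n) = (f^^q) (Suc n)"
      using funpow_pigeon[of f "Suc n" "{1..Suc n}"] by blast
    then obtain m where m: "q = Suc m" by (cases q) auto
    have "a (Suc m) = a p" using pq m unfolding a_def by simp
    moreover have "p \<le> m" using pq m by simp
    ultimately show ?thesis by blast
  qed
  define M where "M = (LEAST m. a (Suc m) \<in> a ` {..m})"
  have hM: "a (Suc M) \<in> a ` {..M}" unfolding M_def by (rule LeastI_ex[OF ex])
  have injM: "inj_on a {..M}"
  proof (rule inj_onI)
    fix p q assume p: "p \<in> {..M}" and q: "q \<in> {..M}" and eq: "a p = a q"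
    show "p = q"
    proof (rule ccontr)
      assume ne: "p \<noteq> q"
      have key: "False" if lt: "p' < q'" "q' \<le> M" "a p' = a q'" for p' q'
      proof -
        obtain q'' where q'': "q' = Suc q''" using lt(1) by (cases q') auto
        have "p' \<in> {..q''}" using lt q'' by simp
        moreover have "a (Suc q'') = a p'" using lt q'' by simp
        ultimately have "a (Suc q'') \<in> a ` {..q''}" by blast
        then have "M \<le> q''" unfolding M_def by (rule Least_le)
        then show False using lt(2) q'' by simp
      qed
      show False
      proof (cases "p < q")
        case True then show False using key[of p q] q eq by simp
      next
        case False then have "q < p" using ne by simp
        then show False using key[of q p] p eq by simp
      qed
    qed
  qed
  have orb: "orbit_of f (Suc n) = a ` {..M}"
  proof (intro equalityI subsetI)
    fix x assume "x \<in> orbit_of f (Suc n)"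
    then obtain k where k: "x = a k" unfolding orbit_of_def a_def by auto
    have "a k \<in> a ` {..M}" for k
    proof (induction k)
      case 0 then show ?case by auto
    next
      case (Suc k)
      then obtain p where p: "p \<le> M" "a k = a p" by auto
      have "a (Suc k) = a (Suc p)" using p(2) aSuc by simp
      moreover have "a (Suc p) \<in> a ` {..M}"
      proof (cases "p < M")
        case True then show ?thesis by auto
      next
        case False then have "p = M" using p(1) by simp
        then show ?thesis using hM by simp
      qed
      ultimately show ?case by simp
    qed
    then show "x \<in> a ` {..M}" using k by simp
  next
    fix x assume "x \<in> a ` {..M}"
    then show "x \<in> orbit_of f (Suc n)" unfolding orbit_of_def a_def by auto
  qed
  have "card (a ` {..M}) = Suc M" using card_image[OF injM] by simp
  then have Mi: "M = i" using co orb by simp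
  obtain t where t: "t \<le> i" "a (Suc i) = a t" using hM Mi by auto
  have t0: "t \<noteq> 0"
  proof
    assume "t = 0"
    then have "a (Suc i) = Suc n" using t unfolding a_def by simp
    then show False using aN[of i] by simp
  qed
  define xs where "xs = map (\<lambda>q. a (Suc q)) [0..<i]"
  define r where "r = t - 1"
  have lxs: "length xs = i" unfolding xs_def by simp
  have xsq: "xs!q = a (Suc q)" if "q < i" for q unfolding xs_def using that by simp
  have dxs: "distinct xs"
  proof -
    have "inj_on (\<lambda>q. a (Suc q)) {0..<i}"
    proof (rule inj_onI)
      fix x y assume xy: "x \<in> {0..<i}" "y \<in> {0..<i}" "a (Suc x) = a (Suc y)"
      have "Suc x \<in> {..M}" "Suc y \<in> {..M}" using xy Mi by auto
      then have "Suc x = Suc y" using inj_onD[OF injM xy(3)] by blast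
      then show "x = y" by simp
    qed
    then show ?thesis unfolding xs_def by (simp add: distinct_map)
  qed
  have sxs: "set xs \<subseteq> {1..n}" unfolding xs_def using aN by auto
  have rl: "r < length xs" using t t0 lxs unfolding r_def by simp
  let ?R = "{1..n} - set xs"
  let ?g = "restrict f ?R"
  have gm: "?g \<in> ?R \<rightarrow>\<^sub>E (?R \<union> set xs)"
  proof (rule PiE_I)
    fix x assume "x \<in> ?R"
    then show "?g x \<in> ?R \<union> set xs" using fmem[of x] by auto
  qed auto
  have feq: "f = bld n xs r ?g"
  proof
    fix x
    show "f x = bld n xs r ?g x"
    proof (cases "x = Suc n")
      case True
      have "0 < i" using t t0 by simp
      then show ?thesis using True bld_top[OF dxs sxs rl] xsq[of 0] aSuc[of 0] unfolding a_def
        by simp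
    next
      case False
      show ?thesis
      proof (cases "x \<in> set xs")
        case True
        then obtain q where q: "q < i" "xs!q = x" using lxs in_set_conv_nth[of x xs] by auto
        have b: "bld n xs r ?g x = xs ! nx (length xs) r q"
          using bld_nth[OF dxs sxs rl, of q] q lxs by simp
        have fx: "f x = a (Suc (Suc q))" using q xsq aSuc by simp
        show ?thesis
        proof (cases "Suc q < i")
          case True then show ?thesis using b fx xsq lxs by (simp add: nx_def)
        next
          case False
          then have "Suc q = i" using q by simp
          then have "f x = a t" using fx t by simp
          moreover have "xs!r = a t" using xsq[of r] rl lxs t0 unfolding r_def by simp
          ultimately show ?thesis using b False lxs by (simp add: nx_def)
        qed
      next
        case nxs: False
        have b: "bld n xs r ?g x = ?g x" using bld_R[OF dxs sxs rl nxs False] .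
        show ?thesis
        proof (cases "x \<in> ?R")
          case True then show ?thesis using b by simp
        next
          case nR: False
          then have "x \<notin> {1..Suc n}" using nxs False by auto
          then show ?thesis using b nR PiE_arb[OF fm] by simp
        qed
      qed
    qed
  qed
  show ?thesis using dxs lxs sxs rl gm feq by blast
qed


definition Iset :: "nat \<Rightarrow> nat \<Rightarrow> nat \<Rightarrow> (nat list \<times> nat) set" where
  "Iset n i j = {xs. length xs = i \<and> distinct xs \<and> set xs \<subseteq> {1..n}} \<times> {r. r < i \<and> i - r \<le> j}"

definition Gset :: "nat \<Rightarrow> nat \<Rightarrow> nat \<Rightarrow> nat list \<times> nat \<Rightarrow> (nat \<Rightarrow> nat) set" where
  "Gset n i j xr = Gp ({1..n} - set (fst xr)) (set (fst xr)) (j - (i - snd xr))"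

definition Phi :: "nat \<Rightarrow> (nat list \<times> nat) \<times> (nat \<Rightarrow> nat) \<Rightarrow> nat \<Rightarrow> nat" where
  "Phi n p = bld n (fst (fst p)) (snd (fst p)) (snd p)"

lemma Fset_image: "Fset n (i+1) j = Phi n ` (SIGMA xr:Iset n i j. Gset n i j xr)"
proof (intro equalityI subsetI)
  fix f assume f: "f \<in> Fset n (i+1) j"
  then have fm: "f \<in> {1..Suc n} \<rightarrow>\<^sub>E {1..n}" and co: "card (orbit_of f (Suc n)) = Suc i"
    and cp: "card {x \<in> {1..Suc n}. periodic_pt f x} = j"
    unfolding Fset_def by auto
  obtain xs r where h: "distinct xs" "length xs = i" "set xs \<subseteq> {1..n}" "r < i"
    and gm: "restrict f ({1..n} - set xs) \<in> ({1..n} - set xs) \<rightarrow>\<^sub>E (({1..n} - set xs) \<union> set xs)"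
    and feq: "f = bld n xs r (restrict f ({1..n} - set xs))"
    using Fset_surj[OF fm co] by blast
  let ?g = "restrict f ({1..n} - set xs)"
  have rl: "r < length xs" using h by simp
  have "j = (i - r) + card {x. perR ({1..n} - set xs) ?g x}"
    using cp card_per[OF h(1) h(3) rl gm] h(2) feq by simp
  then have jr: "i - r \<le> j" and cg: "card {x. perR ({1..n} - set xs) ?g x} = j - (i - r)" by auto
  have "(xs, r) \<in> Iset n i j" unfolding Iset_def using h jr by simp
  moreover have "?g \<in> Gset n i j (xs, r)" unfolding Gset_def Gp_def using gm cg by simp
  ultimately have "((xs, r), ?g) \<in> (SIGMA xr:Iset n i j. Gset n i j xr)" by blast
  moreover have "f = Phi n ((xs, r), ?g)" unfolding Phi_def using feq by simp
  ultimately show "f \<in> Phi n ` (SIGMA xr:Iset n i j. Gset n i j xr)" by blast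
next
  fix f assume "f \<in> Phi n ` (SIGMA xr:Iset n i j. Gset n i j xr)"
  then obtain xs r g where xr: "(xs, r) \<in> Iset n i j" and g: "g \<in> Gset n i j (xs, r)"
    and feq: "f = bld n xs r g" unfolding Phi_def by auto
  have h: "distinct xs" "length xs = i" "set xs \<subseteq> {1..n}" "r < i" "i - r \<le> j"
    using xr unfolding Iset_def by auto
  have gm: "g \<in> ({1..n} - set xs) \<rightarrow>\<^sub>E (({1..n} - set xs) \<union> set xs)"
    and cg: "card {x. perR ({1..n} - set xs) g x} = j - (i - r)"
    using g unfolding Gset_def Gp_def by auto
  have rl: "r < length xs" using h by simp
  have "f \<in> {1..Suc n} \<rightarrow>\<^sub>E {1..n}" using bld_map[OF h(1) h(3) rl gm] feq by simp
  moreover have "card (orbit_of f (Suc n)) = Suc i"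
    using card_orbit_bld[OF h(1) h(3) rl] h(2) feq by simp
  moreover have "card {x \<in> {1..Suc n}. periodic_pt f x} = j"
    using card_per[OF h(1) h(3) rl gm] cg h feq by simp
  ultimately show "f \<in> Fset n (i+1) j" unfolding Fset_def by simp
qed

lemma Phi_inj: "inj_on (Phi n) (SIGMA xr:Iset n i j. Gset n i j xr)"
proof (rule inj_onI)
  fix p p' assume p: "p \<in> (SIGMA xr:Iset n i j. Gset n i j xr)" and p': "p' \<in> (SIGMA xr:Iset n i j. Gset n i j xr)"
    and eq: "Phi n p = Phi n p'"
  obtain xs r g where pd: "p = ((xs, r), g)" by (metis prod.collapse)
  obtain xs' r' g' where pd': "p' = ((xs', r'), g')" by (metis prod.collapse)
  have h: "distinct xs" "length xs = i" "set xs \<subseteq> {1..n}" "r < i"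
    and g: "g \<in> Gset n i j (xs, r)" using p pd unfolding Iset_def by auto
  have h': "distinct xs'" "length xs' = i" "set xs' \<subseteq> {1..n}" "r' < i"
    and g': "g' \<in> Gset n i j (xs', r')" using p' pd' unfolding Iset_def by auto
  have rl: "r < length xs" and rl': "r' < length xs'" using h h' by auto
  have beq: "bld n xs r g = bld n xs' r' g'" using eq pd pd' unfolding Phi_def by simp
  have xseq: "xs = xs'"
  proof (rule nth_equalityI)
    show "length xs = length xs'" using h h' by simp
    fix q assume q: "q < length xs"
    have "xs!q = (bld n xs r g ^^ Suc q) (Suc n)"
      using it_top[OF h(1) h(3) rl] nx_pow_small[OF q] by simp
    also have "\<dots> = (bld n xs' r' g' ^^ Suc q) (Suc n)" using beq by simp
    also have "\<dots> = xs'!q"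
      using it_top[OF h'(1) h'(3) rl'] nx_pow_small[of q "length xs'" r'] q h h' by simp
    finally show "xs!q = xs'!q" .
  qed
  have req: "r = r'"
  proof -
    have i1: "i - 1 < i" using h by simp
    have "bld n xs r g (xs!(i-1)) = xs!r"
      using bld_nth[OF h(1) h(3) rl, of "i-1"] i1 h(2) by (simp add: nx_def)
    moreover have "bld n xs' r' g' (xs'!(i-1)) = xs'!r'"
      using bld_nth[OF h'(1) h'(3) rl', of "i-1"] i1 h'(2) by (simp add: nx_def)
    ultimately have "xs!r = xs!r'" using beq xseq by simp
    then show ?thesis using h(1) rl h' xseq by (simp add: nth_eq_iff_index_eq)
  qed
  have gpi: "g \<in> ({1..n} - set xs) \<rightarrow>\<^sub>E (({1..n} - set xs) \<union> set xs)"
    using g unfolding Gset_def Gp_def by auto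
  have gpi': "g' \<in> ({1..n} - set xs) \<rightarrow>\<^sub>E (({1..n} - set xs) \<union> set xs)"
    using g' xseq unfolding Gset_def Gp_def by auto
  have geq: "g = g'"
  proof
    fix x show "g x = g' x"
    proof (cases "x \<in> {1..n} - set xs")
      case True
      then have "x \<notin> set xs" "x \<noteq> Suc n" by auto
      then have "bld n xs r g x = g x" "bld n xs' r' g' x = g' x"
        using bld_R[OF h(1) h(3) rl] bld_R[OF h'(1) h'(3) rl'] xseq by auto
      then show ?thesis using beq by simp
    next
      case False
      then show ?thesis using PiE_arb[OF gpi] PiE_arb[OF gpi'] by simp
    qed
  qed
  show "p = p'" using pd pd' xseq req geq by simp
qed


definition cnt :: "nat \<Rightarrow> nat \<Rightarrow> nat \<Rightarrow> nat" where
  "cnt n i p = ((n - i) choose p) * (fact p * Nf (n - i - p) (i + p))"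

lemma card_Fset_nat:
  "card (Fset n (i+1) j) = card {xs. length xs = i \<and> distinct xs \<and> set xs \<subseteq> {1..n}}
     * (\<Sum>r\<in>{r. r < i \<and> i - r \<le> j}. cnt n i (j - (i - r)))"
proof -
  let ?D = "{xs. length xs = i \<and> distinct xs \<and> set xs \<subseteq> {1..n}}"
  let ?Rr = "{r. r < i \<and> i - r \<le> j}"
  have finD: "finite ?D"
    by (rule finite_subset[OF _ finite_lists_length_eq[of "{1..n}" i]]) auto
  have finR: "finite ?Rr" by (rule finite_subset[of _ "{..<i}"]) auto
  have finI: "finite (Iset n i j)" unfolding Iset_def using finD finR by simp
  have finG: "finite (Gset n i j xr)" for xr
    unfolding Gset_def Gp_def
    by (rule finite_subset[OF _ finite_PiE[of "{1..n} - set (fst xr)" "\<lambda>_. ({1..n} - set (fst xr)) \<union> set (fst xr)"]]) auto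
  have cG: "card (Gset n i j xr) = cnt n i (j - (i - snd xr))" if xr: "xr \<in> Iset n i j" for xr
  proof -
    obtain xs r where xrd: "xr = (xs, r)" by (cases xr)
    have h: "distinct xs" "length xs = i" "set xs \<subseteq> {1..n}" using xr xrd unfolding Iset_def by auto
    have cT: "card (set xs) = i" using h by (simp add: distinct_card)
    have cR: "card ({1..n} - set xs) = n - i" using h cT by (simp add: card_Diff_subset)
    have "card (Gset n i j xr) = card (Gp ({1..n} - set xs) (set xs) (j - (i - r)))"
      unfolding Gset_def xrd by simp
    also have "\<dots> = cnt n i (j - (i - r))"
    proof -
      have "card (Gp ({1..n} - set xs) (set xs) (j - (i - r)))
          = (card ({1..n} - set xs) choose (j - (i - r))) * (fact (j - (i - r))
             * Nf (card ({1..n} - set xs) - (j - (i - r))) (card (set xs) + (j - (i - r))))"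
        by (rule card_Gp) auto
      then show ?thesis unfolding cR cT cnt_def by simp
    qed
    finally show ?thesis using xrd by simp
  qed
  have "card (Fset n (i+1) j) = card (SIGMA xr:Iset n i j. Gset n i j xr)"
    unfolding Fset_image by (rule card_image[OF Phi_inj])
  also have "\<dots> = (\<Sum>xr\<in>Iset n i j. card (Gset n i j xr))"
    using finI finG by simp
  also have "\<dots> = (\<Sum>xr\<in>Iset n i j. cnt n i (j - (i - snd xr)))"
    by (rule sum.cong[OF refl]) (rule cG)
  also have "\<dots> = (\<Sum>xs\<in>?D. \<Sum>r\<in>?Rr. cnt n i (j - (i - r)))"
  proof -
    let ?h = "\<lambda>r. cnt n i (j - (i - r))"
    show ?thesis unfolding Iset_def by (simp only: sum.cartesian_product' snd_conv)
  qed
  also have "\<dots> = card ?D * (\<Sum>r\<in>?Rr. cnt n i (j - (i - r)))" by simp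
  finally show ?thesis .
qed


lemma card_D_real:
  assumes "i \<le> n"
  shows "real (card {xs. length xs = i \<and> distinct xs \<and> set xs \<subseteq> {1..n}}) * fact (n - i) = fact n"
proof -
  have "card {xs. length xs = i \<and> distinct xs \<and> set xs \<subseteq> {1..n}} = \<Prod>{card {1..n} - i + 1 .. card {1..n}}"
    by (rule card_lists_distinct_length_eq) (use assms in auto)
  then have c: "card {xs. length xs = i \<and> distinct xs \<and> set xs \<subseteq> {1..n}} = \<Prod>{Suc (n - i)..n}" by simp
  have "(fact n :: nat) = fact (n - i) * \<Prod>{Suc (n - i)..n}" by (rule fact_eq_fact_times) simp
  then have "real (fact n) = real (fact (n - i) * \<Prod>{Suc (n - i)..n})" by simp
  then show ?thesis unfolding c by (simp add: of_nat_fact)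
qed

lemma D_empty:
  assumes "n < i"
  shows "{xs. length xs = i \<and> distinct xs \<and> set xs \<subseteq> {1..n}} = {}"
proof -
  have False if "length xs = i" "distinct xs" "set xs \<subseteq> {1..n}" for xs
  proof -
    have "card (set xs) \<le> card {1..n}" using that(3) by (rule card_mono[rotated]) simp
    then show False using that assms by (simp add: distinct_card)
  qed
  then show ?thesis by blast
qed

lemma term_eq:
  assumes n1: "n \<ge> 1" and s: "s < min i j"
  shows "real (card {xs. length xs = i \<and> distinct xs \<and> set xs \<subseteq> {1..n}}) * real (cnt n i (j - Suc s))
    = (real i + real j - real s - 1) * fact n
        * inv_fact (int n - int i - int j + int s + 1)
        * real n powi (int n - int i - int j + int s)"
proof -
  define p where "p = j - Suc s"
  have jp: "j = p + s + 1" unfolding p_def using s by simp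
  have e1: "real i + real j - real s - 1 = real (i + p)" using jp by simp
  have e2: "int n - int i - int j + int s + 1 = int n - int (i + p)" using jp by simp
  have e3: "int n - int i - int j + int s = int n - int (i + p) - 1" using jp by simp
  let ?D = "{xs. length xs = i \<and> distinct xs \<and> set xs \<subseteq> {1..n}}"
  show ?thesis
  proof (cases "n < i + p")
    case True
    have "inv_fact (int n - int (i + p)) = 0" using True by (simp add: inv_fact_def)
    moreover have "real (card ?D) * real (cnt n i p) = 0"
    proof (cases "n < i")
      case True then show ?thesis using D_empty[OF True] by (simp only: card.empty mult_zero_left)
    next
      case False
      then have "n - i < p" using \<open>n < i + p\<close> by simp
      then show ?thesis by (simp add: cnt_def)
    qed
    ultimately show ?thesis unfolding e1 e2 e3 p_def[symmetric] by simp
  next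
    case False
    define q where "q = n - (i + p)"
    have nq: "n = q + (i + p)" unfolding q_def using False by simp
    have iq: "int n - int (i + p) = int q" using nq by simp
    have iv: "inv_fact (int n - int (i + p)) = 1 / fact q" unfolding iq inv_fact_def by simp
    have in_: "i \<le> n" using False by simp
    have fD: "real (card ?D) = fact n / fact (n - i)"
      using card_D_real[OF in_] by (simp add: field_simps)
    have ch: "real ((n - i) choose p) = fact (n - i) / (fact p * fact q)"
    proof -
      have "p \<le> n - i" using False by simp
      from binomial_fact[OF this, where 'a=real] show ?thesis unfolding q_def by (simp add: algebra_simps)
    qed
    have q': "n - i - p = q" unfolding q_def by simp
    have lhs: "real (card ?D) * real (cnt n i p) = fact n / fact q * real (Nf q (i + p))"
    proof -
      have "real (card ?D) * real (cnt n i p)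
          = real (card ?D) * (real ((n - i) choose p) * (fact p * real (Nf q (i + p))))"
        unfolding cnt_def q' by (simp add: of_nat_fact)
      also have "\<dots> = fact n / fact (n - i) * (fact (n - i) / (fact p * fact q) * (fact p * real (Nf q (i + p))))"
        by (simp only: fD ch)
      also have "\<dots> = fact n / fact q * real (Nf q (i + p))"
        by (simp add: field_simps)
      finally show ?thesis .
    qed
    show ?thesis
    proof (cases "q = 0")
      case True
      then have "i + p = n" using nq by simp
      then show ?thesis unfolding e1 e2 e3 p_def[symmetric] lhs iv
        using True n1 by (simp add: Nf_def inv_fact_def field_simps)
    next
      case False
      have ex: "int n - int (i + p) - 1 = int (q - 1)" using nq False by simp
      have nf: "Nf q (i + p) = (i + p) * n ^ (q - 1)" unfolding Nf_def using False nq by simp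
      have R: "(real i + real j - real s - 1) * fact n * inv_fact (int n - int i - int j + int s + 1)
          * real n powi (int n - int i - int j + int s) = real (i + p) * fact n * (1 / fact q) * real n ^ (q - 1)"
      proof -
        have "int (q - 1) + 1 = int q" using False by simp
        then have iv': "inv_fact (int (q - 1) + 1) = 1 / fact q" by (simp add: inv_fact_def)
        show ?thesis by (simp only: e1 e2 e3 iv ex iv' power_int_of_nat)
      qed
      show ?thesis unfolding p_def[symmetric] lhs R nf by (simp add: field_simps)
    qed
  qed
qed

lemma reindex_r:
  "(\<Sum>r\<in>{r. r < i \<and> i - r \<le> j}. cnt n i (j - (i - r))) = (\<Sum>s<min i j. cnt n i (j - Suc s))"
  by (rule sum.reindex_bij_witness[of _ "\<lambda>s. i - 1 - s" "\<lambda>r. i - 1 - r"]) auto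

theorem theorem4:
  fixes n i j :: nat
  assumes "n \<ge> 1"
  shows "real (card (Fset n (i+1) j)) =
    (\<Sum>s<min i j. (real i + real j - real s - 1) * fact n
        * inv_fact (int n - int i - int j + int s + 1)
        * real n powi (int n - int i - int j + int s))"
proof -
  let ?D = "{xs. length xs = i \<and> distinct xs \<and> set xs \<subseteq> {1..n}}"
  have "real (card (Fset n (i+1) j)) = real (card ?D) * (\<Sum>s<min i j. real (cnt n i (j - Suc s)))"
    unfolding card_Fset_nat reindex_r by simp
  also have "\<dots> = (\<Sum>s<min i j. real (card ?D) * real (cnt n i (j - Suc s)))"
    by (simp add: sum_distrib_left)
  also have "\<dots> = (\<Sum>s<min i j. (real i + real j - real s - 1) * fact n
        * inv_fact (int n - int i - int j + int s + 1)
        * real n powi (int n - int i - int j + int s))"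
    by (rule sum.cong[OF refl]) (rule term_eq[OF assms], simp)
  finally show ?thesis .
qed

end
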